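(* For any coprime $r>1$ and $0<a<r$, on the Danilov resolution of $\frac1r(1,a,r-a)$ the $\mathbb Q$-divisors $R_i$ satisfy, for all $i=0,\dots,r-1$ (indices mod $r$), \[X_i=D_X+R_i-R_{i+1},\qquad Y_i=D_Y+R_i-R_{i+a},\qquad Z_i=D_Z+R_i-R_{i-a}.\]
   Context: Notation: for integers $s$ and $t>0$, $\langle s\rangle_t$ is the least non-negative integer congruent to $s$ modulo $t$. A pair of integers $(r,a)$ is admissible if $r\ge1$, $0\le a<r$, $\gcd(r,a)=1$ (so $a=0$ only for $r=1$). For admissible $(r,a)$ put $N(r,a)=\mathbb Z^3+\mathbb Z\cdot\frac1r(1,a,r-a)\subset\mathbb Q^3$; $e_1,e_2,e_3$ is the standard basis, $e_j^*$ the $j$-th coordinate function, and $\Delta(r,a)$ the cone spanned by $e_1,e_2,e_3$. Let $b$ be an inverse of $a$ modulo $r$ and $p_i=\frac1r(\langle -ib\rangle_r,r-i,i)$, $i=0,\dots,r$ (so $p_0=e_2$, $p_r=e_3$, $p_{r-a}=\frac1r(1,a,r-a)$). For $r>1$ let $(r_L,a_L)=(r-a,\langle r\rangle_{r-a})$, $(r_R,a_R)=(a,\langle -r\rangle_a)$; there are lattice isomorphisms $L:N(r_L,a_L)\to N(r,a)$, $R:N(r_R,a_R)\to N(r,a)$ with $L(e_1)=e_1$, $L(e_2)=e_2$, $L(e_3)=p_{r-a}$, $R(e_1)=e_1$, $R(e_2)=p_{r-a}$, $R(e_3)=e_3$. The Danilov fan $\Sigma(r,a)$ is defined recursively: $\Sigma(1,0)$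 is $\Delta(1,0)$ with its faces; for $r>1$, $\Sigma(r,a)$ consists of the cone spanned by $e_2,e_3,p_{r-a}$ with its faces, together with $L(\Sigma(r_L,a_L))$ and $R(\Sigma(r_R,a_R))$. The Danilov resolution $Y$ is the smooth toric variety of $\Sigma(r,a)$, with torus $T$; its rays are spanned by $e_1,p_0,\dots,p_r$; $D_i$ is the $T$-invariant prime divisor of the ray through $p_i$ and $E_j$ that of $e_j$. The permutation $\tau(r,a,\cdot)$ of $\{0,\dots,r-1\}$: if $a\in\{1,r-1\}$, $\tau(r,a,i)=\langle ai-1\rangle_r$; otherwise $\tau(r,a,i)=\tau(r-a,\langle r\rangle_{r-a},\langle i\rangle_{r-a})$ for $i\ge a$ and $\tau(r,a,i)=(r-a)+\tau(a,\langle -r\rangle_a,i)$ for $i<a$. With indices mod $r$, on $Y$ define $Y_{i-a}=\sum_{k=0}^{\tau(r,a,i)}D_k$, $Z_i=\sum_{k=\tau(r,a,i)+1}^{r}D_k$ ($i=0,\dots,r-1$), and $X_0,\dots,X_{r-1}$ the unique divisors with $X_0=E_1$ and $X_i+Z_{i+1}=Z_i+X_{i-a}$ for all $i$. Define the $\mathbb Q$-divisors $D_X=E_1+\sum_{i=0}^r e_1^*(p_i)D_i$, $D_Y=\sum_{i=0}^r e_2^*(p_i)D_i$, $D_Z=\sum_{i=0}^r e_3^*(p_i)D_i$, and let $R_0,\dots,R_{r-1}$ be the unique $\mathbb Q$-divisors with $R_0=0$ and $Z_i=D_Z+R_i-R_{i-a}$ for all $i$. *)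

theory Defs
  imports Complex_Main "HOL-Library.Function_Algebras"
begin

text \<open>T-invariant prime divisors of the Danilov resolution Y: one for each ray.
  The rays are spanned by e_1 (divisor E_1) and p_0,...,p_r (divisors D_0,...,D_r).
  A T-invariant Q-divisor is a Q-linear combination of these, i.e. a function
  from ray labels to rat (labels Dr k with k > r never occur with nonzero coefficient).\<close>

datatype ray = E1 | Dr nat

type_synonym qdiv = "ray \<Rightarrow> rat"

definition E1div :: qdiv where
  "E1div = (\<lambda>\<rho>. if \<rho> = E1 then 1 else 0)"

text \<open>An inverse b of a modulo r (the choice does not matter, only b mod r is used).\<close>
definition inv_b :: "int \<Rightarrow> int \<Rightarrow> int" where
  "inv_b r a = (SOME b. (a * b) mod r = 1 mod r)"

text \<open>Coordinates of p_i = (1/r)(<-ib>_r, r-i, i).\<close>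
definition pcoord1 :: "int \<Rightarrow> int \<Rightarrow> nat \<Rightarrow> rat" where
  "pcoord1 r a i = of_int ((- int i * inv_b r a) mod r) / of_int r"
definition pcoord2 :: "int \<Rightarrow> int \<Rightarrow> nat \<Rightarrow> rat" where
  "pcoord2 r a i = of_int (r - int i) / of_int r"
definition pcoord3 :: "int \<Rightarrow> int \<Rightarrow> nat \<Rightarrow> rat" where
  "pcoord3 r a i = of_int (int i) / of_int r"

text \<open>The permutation tau(r,a,.) (outside admissible inputs the first branch is used;
  this never matters for admissible (r,a), 0 <= i < r).\<close>
function tau :: "int \<Rightarrow> int \<Rightarrow> int \<Rightarrow> int" where
  "tau r a i =
    (if a = 1 \<or> a = r - 1 \<or> a \<le> 0 \<or> a \<ge> r then (a * i - 1) mod r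
     else if i \<ge> a then tau (r - a) (r mod (r - a)) (i mod (r - a))
     else (r - a) + tau a ((- r) mod a) i)"
  by pat_completeness auto
termination by (relation "measure (\<lambda>(r, a, i). nat r)") auto

text \<open>Y_{i-a} = sum_{k=0}^{tau(r,a,i)} D_k, so Y_j = sum_{k=0}^{tau(r,a,<j+a>_r)} D_k;
  Z_i = sum_{k=tau(r,a,i)+1}^{r} D_k. Indices are integers taken mod r.\<close>
definition Ydiv :: "int \<Rightarrow> int \<Rightarrow> int \<Rightarrow> qdiv" where
  "Ydiv r a j = (\<lambda>\<rho>. case \<rho> of E1 \<Rightarrow> 0
     | Dr k \<Rightarrow> if int k \<le> tau r a ((j + a) mod r) then 1 else 0)"

definition Zdiv :: "int \<Rightarrow> int \<Rightarrow> int \<Rightarrow> qdiv" where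
  "Zdiv r a i = (\<lambda>\<rho>. case \<rho> of E1 \<Rightarrow> 0
     | Dr k \<Rightarrow> if tau r a (i mod r) < int k \<and> int k \<le> r then 1 else 0)"

definition Xdiv :: "int \<Rightarrow> int \<Rightarrow> int \<Rightarrow> qdiv" where
  "Xdiv r a = (THE X. (\<forall>i. X i = X (i mod r)) \<and> X 0 = E1div \<and>
      (\<forall>i. X i + Zdiv r a (i + 1) = Zdiv r a i + X (i - a)))"

definition DX :: "int \<Rightarrow> int \<Rightarrow> qdiv" where
  "DX r a = (\<lambda>\<rho>. case \<rho> of E1 \<Rightarrow> 1
     | Dr k \<Rightarrow> if int k \<le> r then pcoord1 r a k else 0)"
definition DY :: "int \<Rightarrow> int \<Rightarrow> qdiv" where
  "DY r a = (\<lambda>\<rho>. case \<rho> of E1 \<Rightarrow> 0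
     | Dr k \<Rightarrow> if int k \<le> r then pcoord2 r a k else 0)"
definition DZ :: "int \<Rightarrow> int \<Rightarrow> qdiv" where
  "DZ r a = (\<lambda>\<rho>. case \<rho> of E1 \<Rightarrow> 0
     | Dr k \<Rightarrow> if int k \<le> r then pcoord3 r a k else 0)"

definition Rdiv :: "int \<Rightarrow> int \<Rightarrow> int \<Rightarrow> qdiv" where
  "Rdiv r a = (THE R. (\<forall>i. R i = R (i mod r)) \<and> R 0 = 0 \<and>
      (\<forall>i. Zdiv r a i = DZ r a + R i - R (i - a)))"

end

theory Submission
  imports Defs
begin


declare tau.simps[simp del]

lemma tau_base: "a = 1 \<or> a = r - 1 \<Longrightarrow> tau r a i = (a * i - 1) mod r"
  by (subst tau.simps) auto

lemma tau_L: "\<not>(a = 1 \<or> a = r - 1 \<or> a \<le> 0 \<or> a \<ge> r) \<Longrightarrow> i \<ge> a \<Longrightarrow>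
  tau r a i = tau (r - a) (r mod (r - a)) (i mod (r - a))"
  by (subst tau.simps) auto

lemma tau_R: "\<not>(a = 1 \<or> a = r - 1 \<or> a \<le> 0 \<or> a \<ge> r) \<Longrightarrow> \<not> i \<ge> a \<Longrightarrow>
  tau r a i = (r - a) + tau a ((- r) mod a) i"
  by (subst tau.simps) auto

lemma adm_L:
  fixes r a :: int
  assumes "1 < r" "1 < a" "a < r - 1" "coprime r a"
  shows "1 < r - a" "0 < r mod (r - a)" "r mod (r - a) < r - a" "coprime (r - a) (r mod (r - a))"
proof -
  show "1 < r - a" using assms by linarith
  have c: "coprime (r - a) r"
  proof (rule coprimeI)
    fix d assume d: "d dvd r - a" "d dvd r"
    then have "d dvd r - (r - a)" by (rule dvd_diff[rotated])
    then have "d dvd a" by simp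
    with d(2) assms(4) show "is_unit d" using coprime_common_divisor by blast
  qed
  then show "coprime (r - a) (r mod (r - a))"
    using assms(3) by simp
  show "r mod (r - a) < r - a" using assms by simp
  show "0 < r mod (r - a)"
  proof (rule ccontr)
    assume "\<not> 0 < r mod (r - a)"
    moreover have "0 \<le> r mod (r - a)" using assms by simp
    ultimately have "r mod (r - a) = 0" by linarith
    then have "(r - a) dvd r" by (simp add: dvd_eq_mod_eq_0)
    with c have "is_unit (r - a)" using coprime_absorb_left by blast
    then have "\<bar>r - a\<bar> = 1" by simp
    with assms show False by linarith
  qed
qed

lemma adm_R:
  fixes r a :: int
  assumes "1 < r" "1 < a" "a < r - 1" "coprime r a"
  shows "0 < (- r) mod a" "(- r) mod a < a" "coprime a ((- r) mod a)"
proof -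
  have c: "coprime a (- r)" using assms(4) by (simp add: coprime_commute coprime_minus_right_iff)
  then show "coprime a ((- r) mod a)"
    using assms by (simp add: coprime_mod_right_iff)
  show "(- r) mod a < a" using assms by simp
  show "0 < (- r) mod a"
  proof (rule ccontr)
    assume "\<not> 0 < (- r) mod a"
    moreover have "0 \<le> (- r) mod a" using assms by simp
    ultimately have "(- r) mod a = 0" by linarith
    then have "a dvd (- r)" by (simp add: dvd_eq_mod_eq_0)
    then have "a dvd r" by simp
    then have "is_unit a" using assms(4) coprime_absorb_left[of a r] by (simp add: coprime_commute)
    then have "\<bar>a\<bar> = 1" by simp
    with assms show False by linarith
  qed
qed

lemma mod_eq_in_range:
  fixes r i j :: int
  assumes "i mod r = j mod r" "0 \<le> i" "i < r" "0 \<le> j" "j < r"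
  shows "i = j"
proof -
  have "i = i mod r" using assms(2,3) by simp
  also have "\<dots> = j mod r" by (rule assms(1))
  also have "\<dots> = j" using assms(4,5) by simp
  finally show ?thesis .
qed

lemma tau_perm:
  fixes r a :: int
  shows "1 < r \<Longrightarrow> 0 < a \<Longrightarrow> a < r \<Longrightarrow> coprime r a \<Longrightarrow>
    (\<forall>i\<in>{0..<r}. tau r a i \<in> {0..<r}) \<and> inj_on (tau r a) {0..<r}"
proof (induction "nat r" arbitrary: r a rule: less_induct)
  case less
  show ?case
  proof (cases "a = 1 \<or> a = r - 1")
    case True
    have rng: "\<forall>i\<in>{0..<r}. tau r a i \<in> {0..<r}"
      using less.prems by (simp add: tau_base[OF True])
    have "inj_on (tau r a) {0..<r}"
    proof (rule inj_onI)
      fix i j assume ij: "i \<in> {0..<r}" "j \<in> {0..<r}" "tau r a i = tau r a j"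
      then have "(a * i - 1) mod r = (a * j - 1) mod r" by (simp add: tau_base[OF True])
      then have "r dvd (a * i - 1) - (a * j - 1)" by (simp add: mod_eq_dvd_iff)
      then have "r dvd a * (i - j)" by (simp add: algebra_simps)
      then have "r dvd (i - j)" using less.prems(4) coprime_dvd_mult_right_iff by blast
      then have "i mod r = j mod r" by (simp add: mod_eq_dvd_iff)
      moreover have "0 \<le> i" "i < r" "0 \<le> j" "j < r" using ij by auto
      ultimately show "i = j" by (rule mod_eq_in_range)
    qed
    with rng show ?thesis by blast
  next
    case False
    have a1: "1 < a" "a < r - 1" using False less.prems by auto
    have nc: "\<not>(a = 1 \<or> a = r - 1 \<or> a \<le> 0 \<or> a \<ge> r)" using False less.prems by auto
    define s where "s = r - a"
    define aL where "aL = r mod s"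
    define aR where "aR = (- r) mod a"
    have admL: "1 < s" "0 < aL" "aL < s" "coprime s aL"
      using adm_L[OF less.prems(1) a1 less.prems(4)] unfolding s_def aL_def by auto
    have admR: "0 < aR" "aR < a" "coprime a aR"
      using adm_R[OF less.prems(1) a1 less.prems(4)] unfolding aR_def by auto
    have IHL: "(\<forall>i\<in>{0..<s}. tau s aL i \<in> {0..<s}) \<and> inj_on (tau s aL) {0..<s}"
      using less.hyps[of s aL] admL less.prems a1 unfolding s_def by auto
    have IHR: "(\<forall>i\<in>{0..<a}. tau a aR i \<in> {0..<a}) \<and> inj_on (tau a aR) {0..<a}"
      using less.hyps[of a aR] admR less.prems a1 by auto
    have tL: "\<And>i. a \<le> i \<Longrightarrow> tau r a i = tau s aL (i mod s)"
      using tau_L[OF nc] unfolding s_def aL_def by auto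
    have tR: "\<And>i. i < a \<Longrightarrow> tau r a i = s + tau a aR i"
      using tau_R[OF nc] unfolding s_def aR_def by auto
    have vL: "\<And>i. a \<le> i \<Longrightarrow> tau r a i \<in> {0..<s}"
    proof -
      fix i :: int assume "a \<le> i"
      have "i mod s \<in> {0..<s}" using admL by simp
      then show "tau r a i \<in> {0..<s}" using IHL tL[OF \<open>a \<le> i\<close>] by auto
    qed
    have vR: "\<And>i. 0 \<le> i \<Longrightarrow> i < a \<Longrightarrow> tau r a i \<in> {s..<r}"
    proof -
      fix i :: int assume "0 \<le> i" "i < a"
      then show "tau r a i \<in> {s..<r}" using IHR tR[OF \<open>i < a\<close>] s_def by auto
    qed
    have rng: "\<forall>i\<in>{0..<r}. tau r a i \<in> {0..<r}"
    proof
      fix i assume "i \<in> {0..<r}"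
      then show "tau r a i \<in> {0..<r}"
        using vL vR s_def a1 by (cases "a \<le> i") force+
    qed
    have "inj_on (tau r a) {0..<r}"
    proof (rule inj_onI)
      fix i j assume ij: "i \<in> {0..<r}" "j \<in> {0..<r}" "tau r a i = tau r a j"
      show "i = j"
      proof (cases "a \<le> i"; cases "a \<le> j")
        assume h: "a \<le> i" "a \<le> j"
        then have "tau s aL (i mod s) = tau s aL (j mod s)" using ij tL by auto
        moreover have "i mod s \<in> {0..<s}" "j mod s \<in> {0..<s}" using admL by auto
        ultimately have "i mod s = j mod s" using IHL by (meson inj_onD)
        then have "s dvd (i - j)" by (simp add: mod_eq_dvd_iff)
        then have "s dvd ((i - a) - (j - a))" by simp
        then have "(i - a) mod s = (j - a) mod s" by (simp add: mod_eq_dvd_iff)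
        moreover have "0 \<le> i - a" "i - a < s" "0 \<le> j - a" "j - a < s" using h ij s_def by auto
        ultimately have "i - a = j - a" by (rule mod_eq_in_range)
        then show "i = j" by simp
      next
        assume h: "\<not> a \<le> i" "\<not> a \<le> j"
        then have "tau a aR i = tau a aR j" using ij tR by auto
        then show "i = j" using IHR h ij by (meson inj_onD atLeastLessThan_iff not_le)
      next
        assume h: "a \<le> i" "\<not> a \<le> j"
        then show "i = j" using vL vR ij by fastforce
      next
        assume h: "\<not> a \<le> i" "a \<le> j"
        then show "i = j" using vL vR ij by fastforce
      qed
    qed
    with rng show ?thesis by blast
  qed
qed




definition inA :: "int \<Rightarrow> int \<Rightarrow> int \<Rightarrow> int \<Rightarrow> bool" where
  "inA r a b x \<longleftrightarrow> (\<exists>t. 1 \<le> t \<and> t \<le> b \<and> (t * a) mod r = x mod r)"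

lemma inA_mod: "inA r a b (x mod r) = inA r a b x"
  by (simp add: inA_def)

lemma inA_cong: "x mod r = y mod r \<Longrightarrow> inA r a b x = inA r a b y"
  by (simp add: inA_def)

lemma inA_one:
  fixes r a b :: int
  assumes "1 \<le> b" "(a * b) mod r = 1 mod r"
  shows "inA r a b 1"
  unfolding inA_def using assms by (intro exI[of _ b]) (simp add: mult.commute)

lemma inA_zero:
  fixes r a b :: int
  assumes "coprime r a" "b < r"
  shows "\<not> inA r a b 0"
proof
  assume "inA r a b 0"
  then obtain t where t: "1 \<le> t" "t \<le> b" "(t * a) mod r = 0" by (auto simp: inA_def)
  then have "r dvd t * a" by auto
  then have "r dvd t" using assms(1) coprime_dvd_mult_left_iff by blast
  then have "r \<le> t" using t by (simp add: zdvd_imp_le)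
  then show False using t assms by simp
qed

lemma inA_shift:
  fixes r a b x :: int
  assumes "(a * b) mod r = 1 mod r" "x mod r \<noteq> 0" "x mod r \<noteq> 1 mod r"
  shows "inA r a b (x + a) = inA r a b x"
proof
  assume "inA r a b (x + a)"
  then obtain t where t: "1 \<le> t" "t \<le> b" "(t * a) mod r = (x + a) mod r" by (auto simp: inA_def)
  then have "r dvd t * a - (x + a)" by (simp add: mod_eq_dvd_iff)
  then have d: "r dvd (t - 1) * a - x" by (simp add: algebra_simps)
  then have m: "((t - 1) * a) mod r = x mod r" by (simp add: mod_eq_dvd_iff)
  have "t \<noteq> 1"
  proof
    assume "t = 1" then show False using m assms(2) by simp
  qed
  then show "inA r a b x" unfolding inA_def using t m by (intro exI[of _ "t - 1"]) auto
next
  assume "inA r a b x"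
  then obtain t where t: "1 \<le> t" "t \<le> b" "(t * a) mod r = x mod r" by (auto simp: inA_def)
  have "t \<noteq> b"
  proof
    assume "t = b" then show False using t assms by (simp add: mult.commute)
  qed
  have "r dvd t * a - x" using t by (simp add: mod_eq_dvd_iff)
  then have "r dvd (t + 1) * a - (x + a)" by (simp add: algebra_simps)
  then have "((t + 1) * a) mod r = (x + a) mod r" by (simp add: mod_eq_dvd_iff)
  then show "inA r a b (x + a)" unfolding inA_def using t \<open>t \<noteq> b\<close> by (intro exI[of _ "t + 1"]) auto
qed




lemma FR:
  fixes r a b c i :: int
  assumes r: "1 < r" and a: "0 < a" "a < r" and bc: "a * b = 1 + c * r" and i: "0 \<le> i" "i < a"
  shows "inA r a b i = inA a ((- r) mod a) c i"
proof
  assume "inA r a b i"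
  then obtain t where t: "1 \<le> t" "t \<le> b" "(t * a) mod r = i mod r" by (auto simp: inA_def)
  define q where "q = (t * a) div r"
  have im: "i mod r = i" using i a by simp
  have ta: "t * a = q * r + i" using t(3) im unfolding q_def by (metis div_mult_mod_eq mult.commute)
  have "a \<le> t * a" using t a by simp
  then have q1: "1 \<le> q"
  proof -
    have "\<not> q \<le> 0"
    proof
      assume "q \<le> 0"
      then have "q * r \<le> 0" using r by (simp add: mult_nonpos_nonneg)
      then show False using ta \<open>a \<le> t * a\<close> i by linarith
    qed
    then show ?thesis by simp
  qed
  have "t * a \<le> b * a" using t a by (simp add: mult_right_mono)
  then have qr: "q * r \<le> 1 + c * r" using ta bc i by (simp add: mult.commute)
  have qc: "q \<le> c"
  proof (rule ccontr)
    assume "\<not> q \<le> c"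
    then have "(c + 1) * r \<le> q * r" using r by (simp add: mult_right_mono)
    then show False using qr r by (simp add: algebra_simps)
  qed
  have "(q * ((- r) mod a)) mod a = (q * (- r)) mod a" by (simp add: mod_mult_right_eq)
  also have "q * (- r) = i - t * a" using ta by simp
  also have "(i - t * a) mod a = (i + (- t) * a) mod a" by simp
  also have "\<dots> = i mod a" by (rule mod_mult_self1)
  finally show "inA a ((- r) mod a) c i" unfolding inA_def using q1 qc by auto
next
  assume "inA a ((- r) mod a) c i"
  then obtain u where u: "1 \<le> u" "u \<le> c" "(u * ((- r) mod a)) mod a = i mod a" by (auto simp: inA_def)
  have im: "i mod a = i" using i by simp
  have "(u * (- r)) mod a = i" using u im by (simp add: mod_mult_right_eq)
  define v where "v = - ((u * (- r)) div a)"
  have va: "v * a = i + u * r"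
    using \<open>(u * (- r)) mod a = i\<close> unfolding v_def
    by (metis add.commute add_diff_cancel_left' diff_minus_eq_add div_mult_mod_eq minus_mult_commute mult_minus_left)
  have "r \<le> u * r" using u r by simp
  then have "0 < v * a" using va i r by linarith
  then have v1: "1 \<le> v" using a by (simp add: zero_less_mult_iff)
  have "u * r \<le> c * r" using u r by (simp add: mult_right_mono)
  then have "v * a < (b + 1) * a" using va bc i by (simp add: algebra_simps)
  then have vb: "v \<le> b" using a by (simp add: mult_less_cancel_right)
  have "(v * a) mod r = i mod r" using va by simp
  then show "inA r a b i" unfolding inA_def using v1 vb by auto
qed



lemma FL:
  fixes r a b c i :: int
  assumes r: "1 < r" and a: "1 < a" "a < r" and bc: "a * b = 1 + c * r"
    and b: "1 \<le> b" and i: "a \<le> i" "i < r"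
  shows "inA r a b i = inA (r - a) (r mod (r - a)) (b - c) i"
proof -
  define s where "s = r - a"
  have s: "0 < s" using a s_def by simp
  have rs: "r = a + s" using s_def by simp
  have bcs: "(b - c) * a = 1 + c * s" using bc rs by (simp add: algebra_simps)
  have modeq: "\<And>u. (u * (r mod s)) mod s = (u * a) mod s"
  proof -
    fix u :: int
    have "(u * (r mod s)) mod s = (u * r) mod s" by (simp add: mod_mult_right_eq)
    also have "u * r = u * a + u * s" using rs by (simp add: algebra_simps)
    also have "(u * a + u * s) mod s = (u * a) mod s" by simp
    finally show "(u * (r mod s)) mod s = (u * a) mod s" .
  qed
  have "inA r a b i = inA s (r mod s) (b - c) i"
  proof
    assume "inA r a b i"
    then obtain t where t: "1 \<le> t" "t \<le> b" "(t * a) mod r = i mod r" by (auto simp: inA_def)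
    define q where "q = (t * a) div r"
    have im: "i mod r = i" using i a by simp
    have ta: "t * a = q * r + i" using t(3) im unfolding q_def by (metis div_mult_mod_eq mult.commute)
    have q0: "0 \<le> q" unfolding q_def using t a r by (simp add: pos_imp_zdiv_nonneg_iff)
    define u where "u = t - q"
    have ua: "u * a = q * s + i" using ta rs unfolding u_def by (simp add: algebra_simps)
    have "0 \<le> q * s" using q0 s by simp
    then have "0 < u * a" using ua i a by linarith
    then have u1: "1 \<le> u" using a by (simp add: zero_less_mult_iff)
    have ub: "u \<le> b - c"
    proof (rule ccontr)
      assume "\<not> u \<le> b - c"
      then have "(b - c + 1) * a \<le> u * a" using a by (simp add: mult_right_mono)
      then have "1 + c * s + a \<le> q * s + i" using bcs ua by (simp add: algebra_simps)
      then have "c * s < (q + 1) * s" using i rs by (simp add: algebra_simps)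
      then have "c < q + 1" using s by (simp add: mult_less_cancel_right)
      then have "b < t" using \<open>\<not> u \<le> b - c\<close> unfolding u_def by linarith
      then show False using t by simp
    qed
    have "(u * (r mod s)) mod s = (q * s + i) mod s" using modeq ua by simp
    also have "\<dots> = i mod s" by simp
    finally show "inA s (r mod s) (b - c) i" unfolding inA_def using u1 ub by auto
  next
    assume "inA s (r mod s) (b - c) i"
    then obtain u where u: "1 \<le> u" "u \<le> b - c" "(u * (r mod s)) mod s = i mod s" by (auto simp: inA_def)
    have "(u * a) mod s = i mod s" using u modeq by simp
    then have "s dvd u * a - i" by (simp add: mod_eq_dvd_iff)
    then obtain w where w: "u * a - i = s * w" by (auto simp: dvd_def)
    have "a \<le> u * a" using u a by simp
    then have "- s < s * w" using w i rs by linarith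
    then have "s * (-1) < s * w" by simp
    then have "-1 < w" using s mult_less_cancel_left_pos by blast
    then have w0: "0 \<le> w" by simp
    have "(u - 1) * a \<le> (b - c - 1) * a" using u a by (simp add: mult_right_mono)
    then have "s * w \<le> 1 + c * s - a" using w i bcs by (simp add: algebra_simps)
    then have "s * w < s * c" using a by (simp add: algebra_simps)
    then have wc: "w < c" using s by (simp add: mult_less_cancel_left)
    define t where "t = u + w"
    have "t * a = i + w * r" unfolding t_def using w rs by (simp add: algebra_simps)
    then have "(t * a) mod r = i mod r" by simp
    moreover have "1 \<le> t" "t \<le> b" unfolding t_def using u w0 wc by auto
    ultimately show "inA r a b i" unfolding inA_def by auto
  qed
  then show ?thesis unfolding s_def .
qed



lemma inA_full:
  fixes r x :: int
  assumes r: "1 < r"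
  shows "inA r (r - 1) (r - 1) x \<longleftrightarrow> \<not> r dvd x"
proof
  assume h: "inA r (r - 1) (r - 1) x"
  show "\<not> r dvd x"
  proof
    assume "r dvd x"
    then have "x mod r = 0 mod r" by simp
    then have "inA r (r - 1) (r - 1) 0" using h inA_cong by blast
    moreover have "coprime r (r - 1)" by (metis coprime_commute coprime_diff_one_left)
    ultimately show False using inA_zero[of r "r - 1" "r - 1"] by simp
  qed
next
  assume h: "\<not> r dvd x"
  define t where "t = r - x mod r"
  have "x mod r \<noteq> 0" using h by (simp add: dvd_eq_mod_eq_0)
  moreover have "0 \<le> x mod r" "x mod r < r" using r by auto
  ultimately have t1: "1 \<le> t" "t \<le> r - 1" unfolding t_def by auto
  have "t * (r - 1) = x mod r + (t - 1) * r" unfolding t_def by (simp add: algebra_simps)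
  then have "(t * (r - 1)) mod r = (x mod r) mod r" by simp
  then have "(t * (r - 1)) mod r = x mod r" by simp
  then show "inA r (r - 1) (r - 1) x" unfolding inA_def using t1 by auto
qed

lemma key:
  fixes r a i b :: int
  shows "1 < r \<Longrightarrow> 0 < a \<Longrightarrow> a < r \<Longrightarrow> coprime r a \<Longrightarrow> 1 \<le> b \<Longrightarrow> b < r \<Longrightarrow>
    (a * b) mod r = 1 \<Longrightarrow> 0 \<le> i \<Longrightarrow> i < r \<Longrightarrow>
    inA r a b (tau r a i + 1) = inA r a b i"
proof (induction r a i arbitrary: b rule: tau.induct)
  case (1 r a i b)
  note prems = "1.prems"
  show ?case
  proof (cases "a = 1 \<or> a = r - 1")
    case True
    have tb: "tau r a i = (a * i - 1) mod r" by (rule tau_base[OF True])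
    have eq: "(tau r a i + 1) mod r = (a * i) mod r"
      unfolding tb by (metis diff_add_cancel mod_add_left_eq)
    have i1: "inA r a b (tau r a i + 1) = inA r a b (a * i)" by (rule inA_cong[OF eq])
    show ?thesis
    proof (cases "a = 1")
      case True
      then show ?thesis using i1 by simp
    next
      case False
      then have ar: "a = r - 1" using \<open>a = 1 \<or> a = r - 1\<close> by simp
      have "(a * b) mod r = (- b + b * r) mod r" unfolding ar by (simp add: algebra_simps)
      also have "\<dots> = (- b) mod r" by (rule mod_mult_self1)
      also have "\<dots> = (r - b) mod r" by (metis add.commute diff_conv_add_uminus mod_add_self2)
      also have "\<dots> = r - b" using prems by (intro mod_pos_pos_trivial) auto
      finally have "b = r - 1" using prems by simp
      have "r dvd a * i \<longleftrightarrow> r dvd (i * r - i)" unfolding ar by (simp add: algebra_simps)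
      also have "\<dots> \<longleftrightarrow> r dvd i"
      proof
        assume "r dvd i * r - i"
        then have "r dvd i * r - (i * r - i)" using dvd_diff dvd_triv_right by blast
        then show "r dvd i" by simp
      next
        assume "r dvd i"
        then show "r dvd i * r - i" using dvd_diff dvd_triv_right by blast
      qed
      finally show ?thesis unfolding i1 using inA_full[OF prems(1)] ar \<open>b = r - 1\<close> by simp
    qed
  next
    case False
    have a1: "1 < a" "a < r - 1" using False prems by auto
    have nc: "\<not>(a = 1 \<or> a = r - 1 \<or> a \<le> 0 \<or> a \<ge> r)" using False prems by auto
    define s where "s = r - a"
    define aL where "aL = r mod s"
    define aR where "aR = (- r) mod a"
    define c where "c = (a * b) div r"
    have admL: "1 < s" "0 < aL" "aL < s" "coprime s aL"
      using adm_L[OF prems(1) a1 prems(4)] unfolding s_def aL_def by auto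
    have admR: "0 < aR" "aR < a" "coprime a aR"
      using adm_R[OF prems(1) a1 prems(4)] unfolding aR_def by auto
    have tL: "\<And>i. a \<le> i \<Longrightarrow> tau r a i = tau s aL (i mod s)"
      using tau_L[OF nc] unfolding s_def aL_def by auto
    have tR: "\<And>i. i < a \<Longrightarrow> tau r a i = s + tau a aR i"
      using tau_R[OF nc] unfolding s_def aR_def by auto
    have rs: "r = a + s" unfolding s_def by simp
    have ab: "a * b = 1 + c * r"
      using div_mult_mod_eq[of "a * b" r] prems(7) unfolding c_def by simp
    have "a \<le> a * b" using prems a1 by simp
    then have "0 < c * r" using ab a1 by linarith
    then have "0 < c" using prems(1) by (simp add: zero_less_mult_iff)
    then have c1: "1 \<le> c" by simp
    have "a * b < a * r" using prems a1 by simp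
    then have "c * r < a * r" using ab by linarith
    then have ca: "c < a" using prems(1) by (simp add: mult_less_cancel_right)
    have "a * b < r * b" using prems a1 by (simp add: mult_strict_right_mono)
    then have "c * r < b * r" using ab by (simp add: algebra_simps)
    then have cb: "c < b" using prems(1) by (simp add: mult_less_cancel_right)
    have bcs: "(b - c) * a = 1 + c * s" using ab rs by (simp add: algebra_simps)
    have "c * s \<le> (a - 1) * s" using ca admL by (simp add: mult_right_mono)
    then have "(b - c) * a < s * a" using bcs admL by (simp add: algebra_simps)
    then have bcs2: "b - c < s" using a1 by (simp add: mult_less_cancel_right)
    have "(aL * (b - c)) mod s = (r * (b - c)) mod s" unfolding aL_def by (simp add: mod_mult_left_eq)
    also have "r * (b - c) = (1 + c * s) + (b - c) * s" using bcs rs by (simp add: algebra_simps)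
    also have "((1 + c * s) + (b - c) * s) mod s = 1 mod s" by simp
    also have "\<dots> = 1" using admL by simp
    finally have mL: "(aL * (b - c)) mod s = 1" .
    have "(aR * c) mod a = ((- r) * c) mod a" unfolding aR_def by (simp add: mod_mult_left_eq)
    also have "(- r) * c = 1 + (- b) * a" using ab by (simp add: algebra_simps)
    also have "(1 + (- b) * a) mod a = 1 mod a" by (rule mod_mult_self1)
    also have "\<dots> = 1" using a1 by simp
    finally have mR: "(aR * c) mod a = 1" .
    have mr1: "(a * b) mod r = 1 mod r" using prems by simp
    have inA0: "\<not> inA r a b 0" using inA_zero prems by blast
    have inAr: "\<not> inA r a b r"
      using inA0 inA_cong[of r r 0 a b] by simp
    show ?thesis
    proof (cases "a \<le> i")
      case True
      define j where "j = i mod s"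
      have j: "0 \<le> j" "j < s" unfolding j_def using admL by auto
      define y0 where "y0 = tau s aL j"
      have y0: "0 \<le> y0" "y0 < s"
        using tau_perm[of s aL] admL j unfolding y0_def by auto
      have IH: "inA s aL (b - c) (y0 + 1) = inA s aL (b - c) j"
        using "1.IH"(1)[OF nc True, of "b - c"] admL cb bcs2 mL j
        unfolding y0_def j_def s_def aL_def by auto
      have FLi: "inA r a b i = inA s aL (b - c) i"
        using FL[OF prems(1) a1(1) prems(3) ab prems(5) True prems(9)] unfolding s_def aL_def .
      have Y1: "inA r a b y = inA s aL (b - c) y" if y: "1 \<le> y" "y \<le> s" for y
      proof -
        consider "y = 1" | "y = s" | "2 \<le> y" "y \<le> s - 1" using y by linarith
        then show ?thesis
        proof cases
          case 1
          have "inA r a b 1" using inA_one[of b a r] prems by simp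
          moreover have "inA s aL (b - c) 1" using inA_one[of "b - c" aL s] cb mL admL by simp
          ultimately show ?thesis using 1 by simp
        next
          case 2
          have "s mod r = s" using admL rs a1 by simp
          then have "inA r a b (s + a) = inA r a b s"
            using inA_shift[OF mr1, of s] admL prems(1) by simp
          then have "\<not> inA r a b s" using inAr rs by (simp add: add.commute)
          moreover have "\<not> inA s aL (b - c) s"
          proof -
            have "\<not> inA s aL (b - c) 0" using inA_zero admL bcs2 by blast
            then show ?thesis using inA_cong[of s s 0 aL "b - c"] by simp
          qed
          ultimately show ?thesis using 2 by simp
        next
          case 3
          have ym: "y mod r = y" using 3 rs a1 by simp
          have "inA r a b y = inA r a b (y + a)"
            using inA_shift[OF mr1, of y] ym 3 prems(1) by simp
          also have "\<dots> = inA s aL (b - c) (y + a)"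
            using FL[OF prems(1) a1(1) prems(3) ab prems(5), of "y + a"] 3 rs
            unfolding s_def aL_def by simp
          also have "\<dots> = inA s aL (b - c) (y + aL)"
          proof (rule inA_cong)
            have "(y + aL) mod s = (y + r) mod s" unfolding aL_def by (simp add: mod_add_right_eq)
            also have "y + r = (y + a) + 1 * s" using rs by simp
            also have "((y + a) + 1 * s) mod s = (y + a) mod s" by (rule mod_mult_self1)
            finally show "(y + a) mod s = (y + aL) mod s" by simp
          qed
          also have "\<dots> = inA s aL (b - c) y"
          proof -
            have "(aL * (b - c)) mod s = 1 mod s" using mL admL by simp
            moreover have "y mod s = y" using 3 by simp
            ultimately show ?thesis using inA_shift[of aL "b - c" s y] 3 admL by simp
          qed
          finally show ?thesis .
        qed
      qed
      have "inA r a b (tau r a i + 1) = inA s aL (b - c) (y0 + 1)"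
        using Y1[of "y0 + 1"] y0 tL[OF True] unfolding y0_def j_def by simp
      also have "\<dots> = inA s aL (b - c) j" by (rule IH)
      also have "\<dots> = inA s aL (b - c) i" unfolding j_def by (rule inA_mod)
      also have "\<dots> = inA r a b i" using FLi by simp
      finally show ?thesis .
    next
      case False
      then have ia: "i < a" by simp
      define y0 where "y0 = tau a aR i"
      have y0: "0 \<le> y0" "y0 < a"
        using tau_perm[of a aR] admR a1 ia prems(8) unfolding y0_def by auto
      have IH: "inA a aR c (y0 + 1) = inA a aR c i"
        using "1.IH"(2)[OF nc False, of c] admR a1 c1 ca mR ia prems(8)
        unfolding y0_def aR_def by auto
      have FRx: "inA r a b x = inA a aR c x" if "0 \<le> x" "x < a" for x
        using FR[OF prems(1) prems(2) prems(3) ab that] unfolding aR_def .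
      have GR: "inA r a b (s + x) = inA a aR c x" if x: "1 \<le> x" "x \<le> a" for x
      proof (cases "x = a")
        case True
        have "\<not> inA a aR c 0" using inA_zero admR ca by blast
        then have "\<not> inA a aR c a" using inA_cong[of a a 0 aR c] by simp
        then show ?thesis using True inAr rs by (simp add: add.commute)
      next
        case False
        have "inA r a b (s + x) = inA r a b (x - a)"
        proof (rule inA_cong)
          have "s + x = (x - a) + 1 * r" using rs by simp
          then show "(s + x) mod r = (x - a) mod r" by (metis mod_mult_self1)
        qed
        also have "\<dots> = inA r a b ((x - a) + a)"
        proof -
          have "(x - a) mod r = x - a + r"
          proof -
            have "(x - a) mod r = (x - a + 1 * r) mod r" by (rule mod_mult_self1[symmetric])
            also have "\<dots> = (x - a + r) mod r" by simp
            also have "\<dots> = x - a + r" using x False rs a1 by (intro mod_pos_pos_trivial) auto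
            finally show ?thesis .
          qed
          then show ?thesis using inA_shift[OF mr1, of "x - a"] x False rs a1 prems(1) by simp
        qed
        also have "\<dots> = inA a aR c x" using FRx[of x] x False by simp
        finally show ?thesis .
      qed
      have "inA r a b (tau r a i + 1) = inA r a b (s + (y0 + 1))"
        using tR[OF ia] unfolding y0_def by (simp add: add.assoc)
      also have "\<dots> = inA a aR c (y0 + 1)" using GR[of "y0 + 1"] y0 by simp
      also have "\<dots> = inA a aR c i" by (rule IH)
      also have "\<dots> = inA r a b i" using FRx[of i] ia prems(8) by simp
      finally show ?thesis .
    qed
  qed
qed



definition adm :: "int \<Rightarrow> int \<Rightarrow> int \<Rightarrow> bool" where
  "adm r a b \<longleftrightarrow> 1 < r \<and> 0 < a \<and> a < r \<and> coprime r a \<and> 1 \<le> b \<and> b < r \<and> (a * b) mod r = 1"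

lemma bij_of_inj_card:
  assumes "inj_on f A" "f ` A \<subseteq> B" "card A = card B" "finite B"
  shows "bij_betw f A B"
proof -
  have "card (f ` A) = card B" using assms card_image by metis
  then have "f ` A = B" using card_subset_eq assms by blast
  then show ?thesis using assms unfolding bij_betw_def by blast
qed

lemma bij_card_filter:
  assumes "bij_betw f A B"
  shows "card {x\<in>A. P (f x)} = card {y\<in>B. P y}"
proof -
  have "bij_betw f {x\<in>A. P (f x)} {y\<in>B. P y}"
    using assms unfolding bij_betw_def inj_on_def by auto
  then show ?thesis by (rule bij_betw_same_card)
qed

lemma tau_bij:
  assumes "adm r a b"
  shows "bij_betw (tau r a) {0..<r} {0..<r}"
proof -
  have h: "1 < r" "0 < a" "a < r" "coprime r a" using assms unfolding adm_def by auto
  have p: "(\<forall>i\<in>{0..<r}. tau r a i \<in> {0..<r}) \<and> inj_on (tau r a) {0..<r}"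
    by (rule tau_perm[OF h])
  show ?thesis
    by (rule bij_of_inj_card) (use p in auto)
qed

lemma mult_bij:
  assumes "adm r a b"
  shows "bij_betw (\<lambda>t::nat. (int t * a) mod r) {1..nat r} {0..<r}"
proof (rule bij_of_inj_card)
  have h: "1 < r" "0 < a" "a < r" "coprime r a" using assms unfolding adm_def by auto
  show "inj_on (\<lambda>t::nat. (int t * a) mod r) {1..nat r}"
  proof (rule inj_onI)
    fix t1 t2 :: nat assume t: "t1 \<in> {1..nat r}" "t2 \<in> {1..nat r}"
      "(int t1 * a) mod r = (int t2 * a) mod r"
    then have "r dvd int t1 * a - int t2 * a" by (simp add: mod_eq_dvd_iff)
    then have "r dvd a * (int t1 - int t2)" by (simp add: algebra_simps)
    then have "r dvd (int t1 - int t2)" using h(4) coprime_dvd_mult_right_iff by blast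
    then have "r dvd (int t1 - 1) - (int t2 - 1)" by simp
    then have "(int t1 - 1) mod r = (int t2 - 1) mod r" by (simp add: mod_eq_dvd_iff)
    moreover have "0 \<le> int t1 - 1" "int t1 - 1 < r" "0 \<le> int t2 - 1" "int t2 - 1 < r" using t h by auto
    ultimately have "int t1 - 1 = int t2 - 1" by (rule mod_eq_in_range)
    then show "t1 = t2" by simp
  qed
  show "(\<lambda>t::nat. (int t * a) mod r) ` {1..nat r} \<subseteq> {0..<r}" using h by auto
  show "card {1..nat r} = card {0..<r}" by simp
  show "finite {0..<r}" by simp
qed

lemma count_full:
  assumes "adm r a b" "0 \<le> k" "k \<le> r"
  shows "card {t \<in> {1..nat r}. tau r a ((int t * a) mod r) < k} = nat k"
proof -
  have bij: "bij_betw (\<lambda>t. tau r a ((int t * a) mod r)) {1..nat r} {0..<r}"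
    using bij_betw_trans[OF mult_bij[OF assms(1)] tau_bij[OF assms(1)]] by (simp add: comp_def)
  have "card {t \<in> {1..nat r}. tau r a ((int t * a) mod r) < k} = card {y \<in> {0..<r}. y < k}"
    using bij_card_filter[OF bij, of "\<lambda>y. y < k"] by simp
  also have "{y \<in> {0..<r}. y < k} = {0..<k}" using assms by auto
  finally show ?thesis by simp
qed

lemma inA_iff_mod:
  assumes "adm r a b"
  shows "inA r a b x \<longleftrightarrow> 1 \<le> (x * b) mod r \<and> (x * b) mod r \<le> b"
proof
  have h: "1 < r" "1 \<le> b" "b < r" "(a * b) mod r = 1" using assms unfolding adm_def by auto
  assume "inA r a b x"
  then obtain t where t: "1 \<le> t" "t \<le> b" "(t * a) mod r = x mod r" by (auto simp: inA_def)
  have "(x * b) mod r = ((x mod r) * b) mod r" by (simp add: mod_mult_left_eq)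
  also have "\<dots> = ((t * a) mod r * b) mod r" using t by simp
  also have "\<dots> = (t * (a * b)) mod r" by (simp add: mod_mult_left_eq mult.assoc)
  also have "\<dots> = (t * ((a * b) mod r)) mod r" by (simp add: mod_mult_right_eq)
  also have "\<dots> = t" using h t by simp
  finally show "1 \<le> (x * b) mod r \<and> (x * b) mod r \<le> b" using t by simp
next
  have h: "1 < r" "1 \<le> b" "b < r" "(a * b) mod r = 1" using assms unfolding adm_def by auto
  assume m: "1 \<le> (x * b) mod r \<and> (x * b) mod r \<le> b"
  define t where "t = (x * b) mod r"
  have "(t * a) mod r = ((x * b) * a) mod r" unfolding t_def by (rule mod_mult_left_eq)
  also have "((x * b) * a) mod r = (x * (a * b)) mod r" by (simp add: ac_simps)
  also have "\<dots> = (x * ((a * b) mod r)) mod r" by (simp add: mod_mult_right_eq)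
  also have "\<dots> = x mod r" using h by simp
  finally show "inA r a b x" unfolding inA_def using m t_def by auto
qed



lemma arith_step:
  fixes b r u :: int
  assumes "1 \<le> b" "b < r" "0 \<le> u" "u < r"
  shows "(if 1 \<le> u \<and> u \<le> b then r else 0) = b + (- u) mod r - (b - u) mod r"
proof -
  have m1: "(x + r) mod r = x mod r" for x :: int by simp
  show ?thesis
  proof (cases "u = 0")
    case True then show ?thesis using assms by simp
  next
    case False
    have nu: "(- u) mod r = r - u"
      using m1[of "- u"] assms False by (metis add.commute diff_conv_add_uminus le_less mod_pos_pos_trivial diff_less_eq add_le_cancel_left diff_ge_0_iff_ge less_add_same_cancel2 diff_less)
    show ?thesis
    proof (cases "u \<le> b")
      case True
      have "(b - u) mod r = b - u" using True assms by (intro mod_pos_pos_trivial) auto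
      then show ?thesis using nu True False assms by simp
    next
      case f2: False
      have "(b - u) mod r = (b - u + r) mod r" by simp
      also have "\<dots> = b - u + r" using f2 assms by (intro mod_pos_pos_trivial) auto
      finally show ?thesis using nu f2 False assms by simp
    qed
  qed
qed

lemma count_b:
  assumes adm: "adm r a b"
  shows "k \<le> nat r \<Longrightarrow> int (card {t\<in>{1..nat b}. tau r a ((int t * a) mod r) < int k}) * r
           = int k * b + (- int k * b) mod r"
proof (induction k)
  have h: "1 < r" "0 < a" "a < r" "coprime r a" "1 \<le> b" "b < r" "(a * b) mod r = 1"
    using adm unfolding adm_def by auto
  case 0
  have "\<And>t. tau r a ((int t * a) mod r) \<in> {0..<r}"
    using tau_perm[OF h(1-4)] h(1) by simp
  then have "\<And>t. \<not> tau r a ((int t * a) mod r) < 0" by (simp add: not_less)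
  then show ?case by simp
next
  have h: "1 < r" "0 < a" "a < r" "coprime r a" "1 \<le> b" "b < r" "(a * b) mod r = 1"
    using adm unfolding adm_def by auto
  case (Suc k)
  then have kr: "int k < r" "k \<le> nat r" by auto
  define f where "f t = tau r a ((int t * a) mod r)" for t :: nat
  define S where "S = {t\<in>{1..nat b}. f t < int k}"
  define E where "E = {t\<in>{1..nat b}. f t = int k}"
  have IH: "int (card S) * r = int k * b + (- int k * b) mod r"
    using Suc.IH kr unfolding S_def f_def by simp
  have SE: "{t\<in>{1..nat b}. f t < int (Suc k)} = S \<union> E" unfolding S_def E_def by auto
  have disj: "S \<inter> E = {}" unfolding S_def E_def by auto
  have cardSE: "card (S \<union> E) = card S + card E"
    using disj by (intro card_Un_disjoint) (auto simp: S_def E_def)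
  have tb: "bij_betw (tau r a) {0..<r} {0..<r}" by (rule tau_bij[OF adm])
  have "int k \<in> {0..<r}" using kr by simp
  then obtain i where i: "i \<in> {0..<r}" "tau r a i = int k"
    using tb unfolding bij_betw_def by (metis imageE)
  have inA_eq: "inA r a b i = inA r a b (int k + 1)"
    using key[OF h, of i] i by simp
  have Eeq: "E = {t\<in>{1..nat b}. (int t * a) mod r = i}"
  proof -
    have "f t = int k \<longleftrightarrow> (int t * a) mod r = i" for t
    proof
      assume "f t = int k"
      then have "tau r a ((int t * a) mod r) = tau r a i" using i unfolding f_def by simp
      moreover have "(int t * a) mod r \<in> {0..<r}" using h by simp
      ultimately show "(int t * a) mod r = i"
        using tb i unfolding bij_betw_def by (meson inj_onD)
    next
      assume "(int t * a) mod r = i"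
      then show "f t = int k" using i unfolding f_def by simp
    qed
    then show ?thesis unfolding E_def by auto
  qed
  have cardE: "int (card E) * r = (if inA r a b (int k + 1) then r else 0)"
  proof (cases "inA r a b i")
    case True
    then obtain t0 where t0: "1 \<le> t0" "t0 \<le> b" "(t0 * a) mod r = i mod r" by (auto simp: inA_def)
    have im: "i mod r = i" using i by simp
    have "E = {nat t0}"
    proof
      show "{nat t0} \<subseteq> E" unfolding Eeq using t0 im by auto
      show "E \<subseteq> {nat t0}"
      proof
        fix t assume "t \<in> E"
        then have t: "t \<in> {1..nat b}" "(int t * a) mod r = i" unfolding Eeq by auto
        have "(int t * a) mod r = (int (nat t0) * a) mod r" using t t0 im by simp
        moreover have "t \<in> {1..nat r}" "nat t0 \<in> {1..nat r}" using t t0 h by auto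
        ultimately have "t = nat t0"
          using mult_bij[OF adm] unfolding bij_betw_def by (meson inj_onD)
        then show "t \<in> {nat t0}" by simp
      qed
    qed
    then show ?thesis using True inA_eq by simp
  next
    case False
    have "E = {}"
    proof (rule ccontr)
      assume "E \<noteq> {}"
      then obtain t where "t \<in> E" by blast
      then have t: "t \<in> {1..nat b}" "(int t * a) mod r = i" unfolding Eeq by auto
      then have "inA r a b i" unfolding inA_def using i
        by (intro exI[of _ "int t"]) auto
      with False show False by simp
    qed
    then show ?thesis using False inA_eq by simp
  qed
  define u where "u = ((int k + 1) * b) mod r"
  have u: "0 \<le> u" "u < r" unfolding u_def using h by auto
  have inAu: "inA r a b (int k + 1) \<longleftrightarrow> 1 \<le> u \<and> u \<le> b"
    using inA_iff_mod[OF adm] unfolding u_def by simp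
  have m1: "(- int k * b) mod r = (b - u) mod r"
  proof -
    have "- int k * b = b - (int k + 1) * b" by (simp add: algebra_simps)
    then show ?thesis unfolding u_def by (metis mod_diff_right_eq)
  qed
  have m2: "(- int (Suc k) * b) mod r = (- u) mod r"
  proof -
    have "- int (Suc k) * b = - ((int k + 1) * b)" by (simp add: algebra_simps)
    then show ?thesis unfolding u_def by (metis mod_minus_eq)
  qed
  have ar: "(if 1 \<le> u \<and> u \<le> b then r else 0) = b + (- u) mod r - (b - u) mod r"
    using arith_step[OF h(5) h(6) u] .
  have "int (card {t\<in>{1..nat b}. f t < int (Suc k)}) * r = int (card S) * r + int (card E) * r"
    unfolding SE cardSE by (simp add: algebra_simps)
  also have "\<dots> = int (Suc k) * b + (- int (Suc k) * b) mod r"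
    unfolding IH cardE m1 m2 using inAu ar by (simp add: algebra_simps)
  finally show ?case unfolding f_def .
qed



definition Rc :: "int \<Rightarrow> int \<Rightarrow> int \<Rightarrow> int \<Rightarrow> qdiv" where
  "Rc r a b i = (\<lambda>\<rho>. \<Sum>t\<in>{1..nat ((i * b) mod r)}. Zdiv r a (int t * a) \<rho> - DZ r a \<rho>)"

lemma Zdiv_cong: "x mod r = y mod r \<Longrightarrow> Zdiv r a x = Zdiv r a y"
  unfolding Zdiv_def by simp

lemma Zdiv_E1 [simp]: "Zdiv r a i E1 = 0" by (simp add: Zdiv_def)
lemma DZ_E1 [simp]: "DZ r a E1 = 0" by (simp add: DZ_def)
lemma DY_E1 [simp]: "DY r a E1 = 0" by (simp add: DY_def)
lemma Ydiv_E1 [simp]: "Ydiv r a i E1 = 0" by (simp add: Ydiv_def)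
lemma DX_E1 [simp]: "DX r a E1 = 1" by (simp add: DX_def)
lemma E1div_E1 [simp]: "E1div E1 = 1" by (simp add: E1div_def)
lemma E1div_Dr [simp]: "E1div (Dr k) = 0" by (simp add: E1div_def)
lemma Zdiv_Dr: "Zdiv r a i (Dr k) = (if tau r a (i mod r) < int k \<and> int k \<le> r then 1 else 0)"
  by (simp add: Zdiv_def)
lemma Ydiv_Dr: "Ydiv r a i (Dr k) = (if int k \<le> tau r a ((i + a) mod r) then 1 else 0)"
  by (simp add: Ydiv_def)
lemma DZ_Dr: "DZ r a (Dr k) = (if int k \<le> r then of_int (int k) / of_int r else 0)"
  by (simp add: DZ_def pcoord3_def)
lemma DY_Dr: "DY r a (Dr k) = (if int k \<le> r then of_int (r - int k) / of_int r else 0)"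
  by (simp add: DY_def pcoord2_def)
lemma DX_Dr: "DX r a (Dr k) = (if int k \<le> r then pcoord1 r a k else 0)"
  by (simp add: DX_def)

lemma sum_indicator:
  fixes P :: "nat \<Rightarrow> bool"
  assumes "finite A"
  shows "(\<Sum>t\<in>A. (if P t then 1 else 0 :: rat)) = of_nat (card {t\<in>A. P t})"
proof -
  have "(\<Sum>t\<in>A. (if P t then 1 else 0 :: rat)) = (\<Sum>t\<in>{t\<in>A. P t}. 1)"
    using sum.inter_filter[OF assms, of "\<lambda>_. 1 :: rat" P] by simp
  then show ?thesis by simp
qed

lemma sum_term_Dr:
  assumes "int k \<le> r" "finite A"
  shows "(\<Sum>t\<in>A. Zdiv r a (int t * a) (Dr k) - DZ r a (Dr k))
    = of_nat (card {t\<in>A. tau r a ((int t * a) mod r) < int k}) - of_nat (card A) * (of_int (int k) / of_int r)"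
proof -
  have "(\<Sum>t\<in>A. Zdiv r a (int t * a) (Dr k) - DZ r a (Dr k))
      = (\<Sum>t\<in>A. (if tau r a ((int t * a) mod r) < int k then 1 else 0 :: rat)) - (\<Sum>t\<in>A. of_int (int k) / of_int r)"
    using assms by (simp add: Zdiv_Dr DZ_Dr sum_subtractf)
  also have "\<dots> = of_nat (card {t\<in>A. tau r a ((int t * a) mod r) < int k}) - of_nat (card A) * (of_int (int k) / of_int r)"
    using sum_indicator[OF assms(2)] by simp
  finally show ?thesis .
qed

lemma sum_term_big:
  assumes "\<not> int k \<le> r"
  shows "(\<Sum>t\<in>A. Zdiv r a (int t * a) (Dr k) - DZ r a (Dr k)) = 0"
  using assms by (simp add: Zdiv_Dr DZ_Dr)

lemma fullsum:
  assumes adm: "adm r a b"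
  shows "(\<Sum>t\<in>{1..nat r}. Zdiv r a (int t * a) \<rho> - DZ r a \<rho>) = 0"
proof (cases \<rho>)
  case E1 then show ?thesis by simp
next
  case (Dr k)
  have r: "1 < r" using adm unfolding adm_def by auto
  show ?thesis
  proof (cases "int k \<le> r")
    case True
    have c: "card {t \<in> {1..nat r}. tau r a ((int t * a) mod r) < int k} = k"
      using count_full[OF adm, of "int k"] True by simp
    show ?thesis unfolding Dr sum_term_Dr[OF True finite_atLeastAtMost] c
      using r by simp
  next
    case False then show ?thesis unfolding Dr by (rule sum_term_big)
  qed
qed

lemma mod_back:
  assumes adm: "adm r a b"
  shows "(((i * b) mod r) * a) mod r = i mod r"
proof -
  have h: "(a * b) mod r = 1" "1 < r" using adm unfolding adm_def by auto
  have "(((i * b) mod r) * a) mod r = ((i * b) * a) mod r" by (rule mod_mult_left_eq)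
  also have "((i * b) * a) mod r = (i * (a * b)) mod r" by (simp add: ac_simps)
  also have "\<dots> = (i * ((a * b) mod r)) mod r" by (simp add: mod_mult_right_eq)
  also have "\<dots> = i mod r" using h by simp
  finally show ?thesis .
qed

lemma Rrec:
  assumes adm: "adm r a b"
  shows "Zdiv r a i = DZ r a + Rc r a b i - Rc r a b (i - a)"
proof -
  have h: "1 < r" "0 < a" "a < r" "(a * b) mod r = 1" using adm unfolding adm_def by auto
  define m where "m = (i * b) mod r"
  have m: "0 \<le> m" "m < r" unfolding m_def using h by auto
  have m': "((i - a) * b) mod r = (m - 1) mod r"
  proof -
    have "((i - a) * b) mod r = (i * b - a * b) mod r" by (simp add: algebra_simps)
    also have "\<dots> = ((i * b) mod r - (a * b) mod r) mod r" by (rule mod_diff_eq[symmetric])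
    finally show ?thesis using h unfolding m_def by simp
  qed
  have Zi: "Zdiv r a (m * a) = Zdiv r a i"
    by (rule Zdiv_cong) (use mod_back[OF adm, of i] in \<open>simp add: m_def\<close>)
  show ?thesis
  proof (cases "m = 0")
    case False
    then have m1: "((i - a) * b) mod r = m - 1" using m m' by simp
    have nm: "nat m = Suc (nat (m - 1))" using False m by simp
    show ?thesis
    proof (rule ext)
      fix \<rho>
      have "Rc r a b i \<rho> = (\<Sum>t\<in>{1..Suc (nat (m - 1))}. Zdiv r a (int t * a) \<rho> - DZ r a \<rho>)"
        unfolding Rc_def m_def[symmetric] nm by simp
      also have "\<dots> = Rc r a b (i - a) \<rho> + (Zdiv r a (int (Suc (nat (m - 1))) * a) \<rho> - DZ r a \<rho>)"
        unfolding Rc_def m1 by simp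
      also have "int (Suc (nat (m - 1))) = m" using False m by simp
      finally show "Zdiv r a i \<rho> = (DZ r a + Rc r a b i - Rc r a b (i - a)) \<rho>"
        using Zi by simp
    qed
  next
    case True
    have mm1: "(-1::int) mod r = r - 1"
    proof -
      have "(-1::int) mod r = ((r - 1) + (-1) * r) mod r" by simp
      also have "\<dots> = (r - 1) mod r" by (rule mod_mult_self1)
      also have "\<dots> = r - 1" using h by (intro mod_pos_pos_trivial) auto
      finally show ?thesis .
    qed
    then have m1: "((i - a) * b) mod r = r - 1" using m' True by simp
    have nr: "nat r = Suc (nat (r - 1))" using h by simp
    have "Zdiv r a (r * a) = Zdiv r a 0" by (rule Zdiv_cong) simp
    then have Zr: "Zdiv r a (r * a) = Zdiv r a i"
      using Zi True by simp
    show ?thesis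
    proof (rule ext)
      fix \<rho>
      have "Rc r a b i \<rho> = 0" unfolding Rc_def m_def[symmetric] True by simp
      moreover have "0 = (\<Sum>t\<in>{1..Suc (nat (r - 1))}. Zdiv r a (int t * a) \<rho> - DZ r a \<rho>)"
        using fullsum[OF adm, of \<rho>] nr by simp
      then have "0 = Rc r a b (i - a) \<rho> + (Zdiv r a (int (Suc (nat (r - 1))) * a) \<rho> - DZ r a \<rho>)"
        unfolding Rc_def m1 by simp
      moreover have "int (Suc (nat (r - 1))) = r" using h by simp
      ultimately show "Zdiv r a i \<rho> = (DZ r a + Rc r a b i - Rc r a b (i - a)) \<rho>"
        using Zr by simp
    qed
  qed
qed



lemma Runiq:
  fixes D :: "int \<Rightarrow> qdiv"
  assumes adm: "adm r a b" and per: "\<And>i. D i = D (i mod r)" and z: "D 0 = 0"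
    and sh: "\<And>i. D i = D (i - a)"
  shows "D i = 0"
proof -
  have mult: "D (int n * a) = 0" for n :: nat
  proof (induction n)
    case 0 then show ?case using z by simp
  next
    case (Suc n)
    have "D (int (Suc n) * a) = D (int (Suc n) * a - a)" by (rule sh)
    also have "int (Suc n) * a - a = int n * a" by (simp add: algebra_simps)
    finally show ?case using Suc.IH by simp
  qed
  have r: "1 < r" using adm unfolding adm_def by auto
  have "D i = D (i mod r)" by (rule per)
  also have "\<dots> = D ((((i * b) mod r) * a) mod r)" using mod_back[OF adm, of i] by simp
  also have "\<dots> = D (((i * b) mod r) * a)" using per by simp
  also have "((i * b) mod r) = int (nat ((i * b) mod r))" using r by simp
  finally show ?thesis using mult by metis
qed

lemma R1:
  assumes adm: "adm r a b" and bdef: "b = inv_b r a mod r"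
  shows "DX r a - Rc r a b 1 = E1div"
proof (rule ext)
  fix \<rho>
  have h: "1 < r" "1 \<le> b" "b < r" using adm unfolding adm_def by auto
  have b1: "(1 * b) mod r = b" using h by simp
  show "(DX r a - Rc r a b 1) \<rho> = E1div \<rho>"
  proof (cases \<rho>)
    case E1 then show ?thesis by (simp add: Rc_def)
  next
    case (Dr k)
    show ?thesis
    proof (cases "int k \<le> r")
      case True
      have cb: "int (card {t\<in>{1..nat b}. tau r a ((int t * a) mod r) < int k}) * r
           = int k * b + (- int k * b) mod r"
        using count_b[OF adm, of k] True by simp
      define C where "C = card {t\<in>{1..nat b}. tau r a ((int t * a) mod r) < int k}"
      have cbr: "(of_nat C :: rat) * of_int r = of_int (int k * b) + of_int ((- int k * b) mod r)"
        using arg_cong[OF cb, of "of_int :: int \<Rightarrow> rat"] unfolding C_def by simp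
      have Rv: "Rc r a b 1 \<rho> = of_nat C - of_nat (nat b) * (of_int (int k) / of_int r)"
        unfolding Rc_def b1 Dr sum_term_Dr[OF True finite_atLeastAtMost] C_def by simp
      have ib: "(- int k * inv_b r a) mod r = (- int k * b) mod r"
        unfolding bdef by (metis mod_mult_right_eq)
      have DXv: "DX r a \<rho> = of_int ((- int k * b) mod r) / of_int r"
        unfolding Dr DX_Dr using True ib by (simp add: pcoord1_def)
      have rne: "(of_int r :: rat) \<noteq> 0" using h by simp
      have nb: "(of_nat (nat b) :: rat) = of_int b" using h by simp
      have "DX r a \<rho> - Rc r a b 1 \<rho> = 0"
        unfolding DXv Rv nb using cbr rne by (simp add: field_simps)
      then show ?thesis using Dr by simp
    next
      case False
      have "Rc r a b 1 \<rho> = 0" unfolding Rc_def Dr using sum_term_big[OF False] by simp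
      then show ?thesis using Dr False by (simp add: DX_Dr)
    qed
  qed
qed

lemma Yrel:
  assumes adm: "adm r a b"
  shows "Ydiv r a i + Zdiv r a (i + a) = DY r a + DZ r a"
proof (rule ext)
  fix \<rho>
  have h: "1 < r" "0 < a" "a < r" "coprime r a" using adm unfolding adm_def by auto
  show "(Ydiv r a i + Zdiv r a (i + a)) \<rho> = (DY r a + DZ r a) \<rho>"
  proof (cases \<rho>)
    case E1 then show ?thesis by simp
  next
    case (Dr k)
    define T where "T = tau r a ((i + a) mod r)"
    have T: "0 \<le> T" "T < r" using tau_perm[OF h] h unfolding T_def by auto
    have rne: "(of_int r :: rat) \<noteq> 0" using h by simp
    show ?thesis
    proof (cases "int k \<le> r")
      case True
      have "(of_int (r - int k) / of_int r + of_int (int k) / of_int r :: rat) = 1"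
        using rne by (simp add: field_simps)
      then show ?thesis unfolding Dr using True
        by (simp add: Ydiv_Dr Zdiv_Dr DY_Dr DZ_Dr T_def[symmetric])
    next
      case False
      then show ?thesis unfolding Dr using T
        by (simp add: Ydiv_Dr Zdiv_Dr DY_Dr DZ_Dr T_def[symmetric])
    qed
  qed
qed



theorem mainTheorem8:
  fixes r a :: int
  assumes "r > 1" and "0 < a" and "a < r" and "coprime r a"
  shows "\<forall>i\<in>{0..<r}.
           Xdiv r a i = DX r a + Rdiv r a i - Rdiv r a (i + 1) \<and>
           Ydiv r a i = DY r a + Rdiv r a i - Rdiv r a (i + a) \<and>
           Zdiv r a i = DZ r a + Rdiv r a i - Rdiv r a (i - a)"
proof -
  have "gcd a r = 1" using assms(4) by (simp add: coprime_iff_gcd_eq_1 gcd.commute)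
  then obtain u v where "u * a + v * r = 1" using bezout_int[of a r] by auto
  then have "(a * u) mod r = 1 mod r"
    by (metis mod_mult_self2 mult.commute)
  then have "\<exists>b. (a * b) mod r = 1 mod r" by blast
  then have ib: "(a * inv_b r a) mod r = 1 mod r" unfolding inv_b_def by (rule someI_ex)
  define b where "b = inv_b r a mod r"
  have ab: "(a * b) mod r = 1" unfolding b_def using ib assms(1) by (simp add: mod_mult_right_eq)
  have b0: "0 \<le> b" "b < r" unfolding b_def using assms(1) by auto
  have "b \<noteq> 0" using ab assms(1) by auto
  then have adm: "adm r a b" unfolding adm_def using assms ab b0 by auto
  define R where "R = Rc r a b"
  have Rper: "R i = R (i mod r)" for i
    unfolding R_def Rc_def by (simp add: mod_mult_left_eq)
  have R0: "R 0 = 0" unfolding R_def Rc_def by (rule ext) simp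
  have Rr: "Zdiv r a i = DZ r a + R i - R (i - a)" for i
    unfolding R_def by (rule Rrec[OF adm])
  have Rdiv_eq: "Rdiv r a = R"
    unfolding Rdiv_def
  proof (rule the_equality)
    show "(\<forall>i. R i = R (i mod r)) \<and> R 0 = 0 \<and> (\<forall>i. Zdiv r a i = DZ r a + R i - R (i - a))"
      using Rper R0 Rr by blast
  next
    fix R' assume h: "(\<forall>i. R' i = R' (i mod r)) \<and> R' 0 = 0 \<and> (\<forall>i. Zdiv r a i = DZ r a + R' i - R' (i - a))"
    define D where "D i = R' i - R i" for i
    have "D i = 0" for i
    proof (rule Runiq[OF adm])
      show "D i = D (i mod r)" for i unfolding D_def using h Rper by metis
      show "D 0 = 0" unfolding D_def using h R0 by simp
      show "D i = D (i - a)" for i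
      proof (rule ext)
        fix \<rho>
        have "Zdiv r a i \<rho> = (DZ r a + R' i - R' (i - a)) \<rho>" using h by metis
        moreover have "Zdiv r a i \<rho> = (DZ r a + R i - R (i - a)) \<rho>" using Rr by metis
        ultimately show "D i \<rho> = D (i - a) \<rho>" unfolding D_def by simp
      qed
    qed
    then show "R' = R"
    proof -
      assume d: "\<And>i. D i = 0"
      show "R' = R"
      proof (rule ext)
        fix i show "R' i = R i" using d[of i] unfolding D_def by simp
      qed
    qed
  qed
  define Xc where "Xc i = DX r a + R i - R (i + 1)" for i
  have Xper: "Xc i = Xc (i mod r)" for i
  proof -
    have "R (i mod r + 1) = R ((i mod r + 1) mod r)" by (rule Rper)
    also have "(i mod r + 1) mod r = (i + 1) mod r" by (simp add: mod_add_left_eq)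
    also have "R \<dots> = R (i + 1)" by (rule Rper[symmetric])
    finally show ?thesis unfolding Xc_def using Rper[of i] by simp
  qed
  have X0: "Xc 0 = E1div" unfolding Xc_def using R1[OF adm b_def] R0 unfolding R_def by simp
  have Xr: "Xc i + Zdiv r a (i + 1) = Zdiv r a i + Xc (i - a)" for i
  proof (rule ext)
    fix \<rho>
    have e: "i + 1 - a = i - a + 1" by simp
    have z1: "Zdiv r a i \<rho> = (DZ r a + R i - R (i - a)) \<rho>" using Rr by metis
    have z2: "Zdiv r a (i + 1) \<rho> = (DZ r a + R (i + 1) - R (i - a + 1)) \<rho>" using Rr[of "i + 1"] e by metis
    show "(Xc i + Zdiv r a (i + 1)) \<rho> = (Zdiv r a i + Xc (i - a)) \<rho>"
      unfolding Xc_def using z1 z2 by simp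
  qed
  have Xdiv_eq: "Xdiv r a = Xc"
    unfolding Xdiv_def
  proof (rule the_equality)
    show "(\<forall>i. Xc i = Xc (i mod r)) \<and> Xc 0 = E1div \<and> (\<forall>i. Xc i + Zdiv r a (i + 1) = Zdiv r a i + Xc (i - a))"
      using Xper X0 Xr by blast
  next
    fix X' assume h: "(\<forall>i. X' i = X' (i mod r)) \<and> X' 0 = E1div \<and> (\<forall>i. X' i + Zdiv r a (i + 1) = Zdiv r a i + X' (i - a))"
    define D where "D i = X' i - Xc i" for i
    have "D i = 0" for i
    proof (rule Runiq[OF adm])
      show "D i = D (i mod r)" for i unfolding D_def using h Xper by metis
      show "D 0 = 0" unfolding D_def using h X0 by simp
      show "D i = D (i - a)" for i
      proof (rule ext)
        fix \<rho>
        have "(X' i + Zdiv r a (i + 1)) \<rho> = (Zdiv r a i + X' (i - a)) \<rho>" using h by metis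
        moreover have "(Xc i + Zdiv r a (i + 1)) \<rho> = (Zdiv r a i + Xc (i - a)) \<rho>" using Xr by metis
        ultimately show "D i \<rho> = D (i - a) \<rho>" unfolding D_def by simp
      qed
    qed
    then show "X' = Xc"
    proof -
      assume d: "\<And>i. D i = 0"
      show "X' = Xc"
      proof (rule ext)
        fix i show "X' i = Xc i" using d[of i] unfolding D_def by simp
      qed
    qed
  qed
  show ?thesis
  proof (intro ballI conjI)
    fix i
    show "Xdiv r a i = DX r a + Rdiv r a i - Rdiv r a (i + 1)"
      unfolding Xdiv_eq Rdiv_eq Xc_def ..
    show "Zdiv r a i = DZ r a + Rdiv r a i - Rdiv r a (i - a)"
      unfolding Rdiv_eq by (rule Rr)
    show "Ydiv r a i = DY r a + Rdiv r a i - Rdiv r a (i + a)"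
      unfolding Rdiv_eq
    proof (rule ext)
      fix \<rho>
      have y: "(Ydiv r a i + Zdiv r a (i + a)) \<rho> = (DY r a + DZ r a) \<rho>" using Yrel[OF adm] by metis
      have z: "Zdiv r a (i + a) \<rho> = (DZ r a + R (i + a) - R i) \<rho>" using Rr[of "i + a"] by simp
      show "Ydiv r a i \<rho> = (DY r a + R i - R (i + a)) \<rho>" using y z by simp
    qed
  qed
qed


end
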